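(* Let $F,G:\mathbb{R}\to\mathbb{C}$ be real-analytic functions such that $|F(x)|=|G(x)|$ and $|F'(x)|=|G'(x)|$ for every $x\in\mathbb{R}$. Then there exists $c\in\mathbb{C}$ with $|c|=1$ such that either $G(x)=cF(x)$ for all $x\in\mathbb{R}$, or $G(x)=c\overline{F(x)}$ for all $x\in\mathbb{R}$. *)

theory Defs
  imports "HOL-Analysis.Analysis"
begin

definition real_analytic :: "(real \<Rightarrow> complex) \<Rightarrow> bool" where
  "real_analytic f \<longleftrightarrow>
     (\<forall>x0. \<exists>a :: nat \<Rightarrow> complex. \<exists>r > 0.
        \<forall>x. \<bar>x - x0\<bar> < r \<longrightarrow> (\<lambda>n. a n * complex_of_real ((x - x0) ^ n)) sums f x)"

end

theory Submission
  imports Defs "HOL-Complex_Analysis.Complex_Analysis"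
begin

definition RA :: "(real \<Rightarrow> complex) \<Rightarrow> bool" where
  "RA g \<longleftrightarrow> (\<forall>x0. \<exists>r>0. \<exists>h. h holomorphic_on ball (complex_of_real x0) r \<and>
       (\<forall>x. \<bar>x - x0\<bar> < r \<longrightarrow> g x = h (of_real x)))"

lemma ra_of:
  assumes "real_analytic f" shows "RA f"
  unfolding RA_def
proof
  fix x0
  obtain a r where r: "r > 0" and S: "\<And>x. \<bar>x - x0\<bar> < r \<Longrightarrow>
      (\<lambda>n. a n * complex_of_real ((x - x0) ^ n)) sums f x"
    using assms unfolding real_analytic_def by blast
  define p where "p = (\<lambda>w::complex. \<Sum>n. a n * w ^ n)"
  have cr: "conv_radius a \<ge> ereal r"
  proof (rule conv_radius_geI_ex')
    fix \<rho> :: real assume "0 < \<rho>" "ereal \<rho> < ereal r"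
    then have "\<bar>(x0 + \<rho>) - x0\<bar> < r" by simp
    from sums_summable[OF S[OF this]]
    show "summable (\<lambda>n. a n * of_real \<rho> ^ n)" by (simp add: of_real_power)
  qed
  have hp: "p holomorphic_on ball 0 r"
  proof (subst holomorphic_on_open, simp, intro ballI exI)
    fix w :: complex assume "w \<in> ball 0 r"
    then have "ereal (norm w) < ereal r" by simp
    then have "ereal (norm w) < conv_radius a" using cr by (rule order_less_le_trans)
    then show "(p has_field_derivative (\<Sum>n. diffs a n * w ^ n)) (at w)"
      unfolding p_def by (rule has_field_derivative_powser)
  qed
  have img: "(\<lambda>z. z - complex_of_real x0) ` ball (complex_of_real x0) r \<subseteq> ball 0 r"
    by (auto simp: dist_norm norm_minus_commute)
  have "(p \<circ> (\<lambda>z. z - complex_of_real x0)) holomorphic_on ball (complex_of_real x0) r"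
    by (rule holomorphic_on_compose) (auto intro!: holomorphic_intros holomorphic_on_subset[OF hp img])
  moreover have "\<forall>x. \<bar>x - x0\<bar> < r \<longrightarrow> f x = (p \<circ> (\<lambda>z. z - complex_of_real x0)) (of_real x)"
  proof (intro allI impI)
    fix x assume "\<bar>x - x0\<bar> < r"
    from sums_unique[OF S[OF this]] show "f x = (p \<circ> (\<lambda>z. z - complex_of_real x0)) (of_real x)"
      by (simp add: p_def of_real_power)
  qed
  ultimately show "\<exists>r>0. \<exists>h. h holomorphic_on ball (complex_of_real x0) r \<and>
       (\<forall>x. \<bar>x - x0\<bar> < r \<longrightarrow> f x = h (of_real x))" using r by blast
qed


lemma ra_comb:
  assumes "RA f" "RA g"
    and hol: "\<And>S h1 h2. h1 holomorphic_on S \<Longrightarrow> h2 holomorphic_on S \<Longrightarrow> (\<lambda>z. op (h1 z) (h2 z)) holomorphic_on S"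
  shows "RA (\<lambda>x. op (f x) (g x))"
  unfolding RA_def
proof
  fix x0
  obtain r1 h1 where r1: "r1 > 0" "h1 holomorphic_on ball (complex_of_real x0) r1"
    "\<forall>x. \<bar>x - x0\<bar> < r1 \<longrightarrow> f x = h1 (of_real x)" using assms(1) unfolding RA_def by blast
  obtain r2 h2 where r2: "r2 > 0" "h2 holomorphic_on ball (complex_of_real x0) r2"
    "\<forall>x. \<bar>x - x0\<bar> < r2 \<longrightarrow> g x = h2 (of_real x)" using assms(2) unfolding RA_def by blast
  have "h1 holomorphic_on ball (complex_of_real x0) (min r1 r2)"
    by (rule holomorphic_on_subset[OF r1(2)]) auto
  moreover have "h2 holomorphic_on ball (complex_of_real x0) (min r1 r2)"
    by (rule holomorphic_on_subset[OF r2(2)]) auto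
  ultimately have "(\<lambda>z. op (h1 z) (h2 z)) holomorphic_on ball (complex_of_real x0) (min r1 r2)"
    by (rule hol)
  then show "\<exists>r>0. \<exists>h. h holomorphic_on ball (complex_of_real x0) r \<and>
       (\<forall>x. \<bar>x - x0\<bar> < r \<longrightarrow> op (f x) (g x) = h (of_real x))"
    using r1 r2 by (intro exI[of _ "min r1 r2"] conjI exI[of _ "\<lambda>z. op (h1 z) (h2 z)"]) auto
qed

lemma ra_add: "RA f \<Longrightarrow> RA g \<Longrightarrow> RA (\<lambda>x. f x + g x)"
  by (rule ra_comb) (auto intro: holomorphic_intros)
lemma ra_diff: "RA f \<Longrightarrow> RA g \<Longrightarrow> RA (\<lambda>x. f x - g x)"
  by (rule ra_comb) (auto intro: holomorphic_intros)
lemma ra_mult: "RA f \<Longrightarrow> RA g \<Longrightarrow> RA (\<lambda>x. f x * g x)"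
  by (rule ra_comb) (auto intro: holomorphic_intros)

lemma ra_const: "RA (\<lambda>x. c)"
  unfolding RA_def by (intro allI exI[of _ 1] conjI exI[of _ "\<lambda>z. c"]) (auto intro: holomorphic_intros)

lemma ra_cnj:
  assumes "RA f" shows "RA (\<lambda>x. cnj (f x))"
  unfolding RA_def
proof
  fix x0
  obtain r h where r: "r > 0" "h holomorphic_on ball (complex_of_real x0) r"
    "\<forall>x. \<bar>x - x0\<bar> < r \<longrightarrow> f x = h (of_real x)" using assms unfolding RA_def by blast
  have sub: "cnj ` ball (complex_of_real x0) r \<subseteq> ball (complex_of_real x0) r"
  proof
    fix w assume "w \<in> cnj ` ball (complex_of_real x0) r"
    then obtain z where z: "z \<in> ball (complex_of_real x0) r" "w = cnj z" by auto
    have "dist (complex_of_real x0) (cnj z) = cmod (cnj (complex_of_real x0 - z))"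
      by (simp add: dist_norm)
    also have "\<dots> = dist (complex_of_real x0) z" by (simp only: complex_mod_cnj dist_norm)
    finally show "w \<in> ball (complex_of_real x0) r" using z by simp
  qed
  have "cnj \<circ> h \<circ> cnj holomorphic_on ball (complex_of_real x0) r"
    by (rule holomorphic_on_compose_cnj_cnj[OF holomorphic_on_subset[OF r(2) sub]]) simp
  then show "\<exists>r>0. \<exists>h. h holomorphic_on ball (complex_of_real x0) r \<and>
       (\<forall>x. \<bar>x - x0\<bar> < r \<longrightarrow> cnj (f x) = h (of_real x))"
    using r by (intro exI[of _ r] conjI exI[of _ "cnj \<circ> h \<circ> cnj"]) auto
qed

lemma ra_local_deriv:
  assumes h: "h holomorphic_on ball (complex_of_real x0) r"
    and eq: "\<forall>y. \<bar>y - x0\<bar> < r \<longrightarrow> f y = h (of_real y)" and x: "\<bar>x - x0\<bar> < r"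
  shows "(f has_vector_derivative deriv h (of_real x)) (at x)"
proof -
  have "of_real x \<in> ball (complex_of_real x0) r"
    using x by (simp add: dist_norm flip: of_real_diff)
  then have "h field_differentiable at (of_real x)"
    using h by (intro holomorphic_on_imp_differentiable_at) auto
  then have "(h has_field_derivative deriv h (of_real x)) (at (of_real x))"
    by (simp add: DERIV_deriv_iff_field_differentiable)
  then have "((\<lambda>y. h (of_real y)) has_vector_derivative deriv h (of_real x)) (at x)"
    by (rule has_vector_derivative_real_field)
  then show ?thesis
    by (rule has_vector_derivative_transform_within_open[where S = "ball x0 r"])
       (use x eq in \<open>auto simp: dist_real_def abs_minus_commute\<close>)
qed

lemma ra_hasderiv:
  assumes "RA f" shows "(f has_vector_derivative vector_derivative f (at x)) (at x)"
proof -
  obtain r h where r: "r > 0" "h holomorphic_on ball (complex_of_real x) r"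
    "\<forall>y. \<bar>y - x\<bar> < r \<longrightarrow> f y = h (of_real y)" using assms unfolding RA_def by blast
  have "f differentiable at x"
    using ra_local_deriv[OF r(2,3), of x] r(1) by (auto intro: differentiableI_vector)
  then show ?thesis by (simp add: vector_derivative_works)
qed

lemma ra_differentiable: "RA f \<Longrightarrow> f differentiable at x"
  using ra_hasderiv differentiableI_vector by blast

lemma ra_isCont: "RA f \<Longrightarrow> isCont f x"
  using ra_differentiable differentiable_imp_continuous_within by blast

lemma ra_vd:
  assumes "RA f" shows "RA (\<lambda>x. vector_derivative f (at x))"
  unfolding RA_def
proof
  fix x0
  obtain r h where r: "r > 0" "h holomorphic_on ball (complex_of_real x0) r"
    "\<forall>x. \<bar>x - x0\<bar> < r \<longrightarrow> f x = h (of_real x)" using assms unfolding RA_def by blast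
  have "deriv h holomorphic_on ball (complex_of_real x0) r"
    using r(2) by (rule holomorphic_deriv) simp
  moreover have "\<forall>x. \<bar>x - x0\<bar> < r \<longrightarrow> vector_derivative f (at x) = deriv h (of_real x)"
    using ra_local_deriv[OF r(2,3)] vector_derivative_at by blast
  ultimately show "\<exists>r>0. \<exists>h. h holomorphic_on ball (complex_of_real x0) r \<and>
       (\<forall>x. \<bar>x - x0\<bar> < r \<longrightarrow> vector_derivative f (at x) = h (of_real x))"
    using r(1) by blast
qed

lemma ra_identity:
  assumes "RA g" and e: "e > 0" and z: "\<And>y. \<bar>y - a\<bar> < e \<Longrightarrow> g y = 0"
  shows "g x = 0"
proof -
  define S where "S = {x. \<exists>e>0. \<forall>y. \<bar>y - x\<bar> < e \<longrightarrow> g y = 0}"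
  have "open S"
    unfolding open_dist S_def
  proof (intro ballI)
    fix x assume "x \<in> {x. \<exists>e>0. \<forall>y. \<bar>y - x\<bar> < e \<longrightarrow> g y = 0}"
    then obtain d where d: "d > 0" "\<forall>y. \<bar>y - x\<bar> < d \<longrightarrow> g y = 0" by blast
    show "\<exists>e>0. \<forall>y. dist y x < e \<longrightarrow> y \<in> {x. \<exists>e>0. \<forall>y. \<bar>y - x\<bar> < e \<longrightarrow> g y = 0}"
    proof (intro exI[of _ d] conjI allI impI)
      fix y assume "dist y x < d"
      then show "y \<in> {x. \<exists>e>0. \<forall>y. \<bar>y - x\<bar> < e \<longrightarrow> g y = 0}"
        using d by (auto simp: dist_real_def intro!: exI[of _ "d - dist y x"])
    qed (use d in auto)
  qed
  moreover have "closed S"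
    unfolding closed_limpt
  proof (intro allI impI)
    fix x assume lim: "x islimpt S"
    obtain r h where r: "r > 0" "h holomorphic_on ball (complex_of_real x) r"
      "\<forall>y. \<bar>y - x\<bar> < r \<longrightarrow> g y = h (of_real y)" using assms(1) unfolding RA_def by blast
    obtain s where s: "s \<in> S" "s \<noteq> x" "dist s x < r / 2"
      using lim r(1) unfolding islimpt_approachable by (metis half_gt_zero)
    obtain d where d: "d > 0" "\<forall>y. \<bar>y - s\<bar> < d \<longrightarrow> g y = 0" using s(1) unfolding S_def by blast
    define d' where "d' = min d (r/2)"
    have d': "d' > 0" using d r by (simp add: d'_def)
    define U where "U = complex_of_real ` {y. \<bar>y - s\<bar> < d'}"
    have U: "U \<subseteq> ball (complex_of_real x) r"
    proof
      fix w assume "w \<in> U"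
      then obtain y where y: "\<bar>y - s\<bar> < d'" "w = of_real y" by (auto simp: U_def)
      have "\<bar>x - y\<bar> < r" using y s(3) unfolding d'_def dist_real_def by linarith
      then show "w \<in> ball (complex_of_real x) r" using y
        by (simp add: dist_norm flip: of_real_diff)
    qed
    have hU: "h w = 0" if "w \<in> U" for w
    proof -
      from that obtain y where y: "\<bar>y - s\<bar> < d'" "w = of_real y" by (auto simp: U_def)
      have "\<bar>y - x\<bar> < r" using y s(3) unfolding d'_def dist_real_def by linarith
      then show ?thesis using r(3) d(2) y by (auto simp: d'_def)
    qed
    have sin: "complex_of_real s \<in> ball (complex_of_real x) r"
      using s(3) r(1) by (simp add: dist_norm dist_real_def abs_minus_commute flip: of_real_diff)
    have limU: "complex_of_real s islimpt U"
      unfolding islimpt_approachable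
    proof (intro allI impI)
      fix \<epsilon> :: real assume "\<epsilon> > 0"
      define t where "t = min \<epsilon> d' / 2"
      have t: "t > 0" "t < \<epsilon>" "t < d'" using \<open>\<epsilon> > 0\<close> d' by (auto simp: t_def)
      show "\<exists>x'\<in>U. x' \<noteq> complex_of_real s \<and> dist x' (complex_of_real s) < \<epsilon>"
      proof (intro bexI[of _ "of_real (s + t)"] conjI)
        show "complex_of_real (s + t) \<in> U" unfolding U_def using t by (intro imageI) simp
      qed (use t in \<open>auto simp: dist_norm simp flip: of_real_add of_real_diff\<close>)
    qed
    have "\<forall>y. \<bar>y - x\<bar> < r \<longrightarrow> g y = 0"
    proof (intro allI impI)
      fix y assume y: "\<bar>y - x\<bar> < r"
      have "h (of_real y) = 0"
        by (rule analytic_continuation[OF r(2) _ _ U sin limU hU])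
           (use y in \<open>auto simp: dist_norm abs_minus_commute simp flip: of_real_diff\<close>)
      then show "g y = 0" using r(3) y by simp
    qed
    then show "x \<in> S" using r(1) unfolding S_def by blast
  qed
  moreover have "a \<in> S" using e z unfolding S_def by blast
  ultimately have "S = UNIV" using clopen by blast
  then have "x \<in> S" by simp
  then show ?thesis unfolding S_def by force
qed


lemma ra_nbhd:
  assumes "RA f" "f x1 \<noteq> a"
  obtains e where "e > 0" "\<And>y. \<bar>y - x1\<bar> < e \<Longrightarrow> f y \<noteq> a"
proof -
  have "continuous (at x1) f" using ra_isCont[OF assms(1)] by simp
  from continuous_at_avoid[OF this assms(2)] obtain e where "e > 0" "\<forall>y. dist x1 y < e \<longrightarrow> f y \<noteq> a"
    by blast
  then show ?thesis using that by (auto simp: dist_real_def abs_minus_commute)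
qed

lemma ra_main:
  fixes F G :: "real \<Rightarrow> complex"
  assumes RF: "RA F" and RG: "RA G" and nrm: "\<And>x. norm (F x) = norm (G x)"
    and pq: "\<And>x. vector_derivative G (at x) * cnj (G x) = vector_derivative F (at x) * cnj (F x)"
  shows "\<exists>c. norm c = 1 \<and> (\<forall>x. G x = c * F x)"
proof (cases "\<forall>x. F x = 0")
  case True
  then have "\<forall>x. G x = 1 * F x" using nrm by (metis mult_1 norm_eq_zero)
  then show ?thesis by (intro exI[of _ 1]) simp
next
  case False
  then obtain x1 where x1: "F x1 \<noteq> 0" by blast
  obtain e where e: "e > 0" "\<And>y. \<bar>y - x1\<bar> < e \<Longrightarrow> F y \<noteq> 0"
    using ra_nbhd[OF RF x1] by blast
  have dz: "\<And>y. y \<in> ball x1 e \<Longrightarrow> ((\<lambda>y. G y * inverse (F y)) has_vector_derivative 0) (at y within ball x1 e)"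
  proof -
    fix y assume y: "y \<in> ball x1 e"
    then have Fy: "F y \<noteq> 0" using e by (auto simp: dist_real_def abs_minus_commute)
    have Gy: "G y \<noteq> 0" using Fy nrm by (metis norm_eq_zero)
    define F' where "F' = vector_derivative F (at y)"
    define G' where "G' = vector_derivative G (at y)"
    have dF: "(F has_vector_derivative F') (at y)" unfolding F'_def by (rule ra_hasderiv[OF RF])
    have dG: "(G has_vector_derivative G') (at y)" unfolding G'_def by (rule ra_hasderiv[OF RG])
    have dI: "((inverse \<circ> F) has_vector_derivative (F' * - (inverse (F y) ^ Suc (Suc 0)))) (at y)"
      by (rule field_vector_diff_chain_at[OF dF DERIV_inverse[OF Fy]])
    have dQ: "((\<lambda>y. G y * (inverse \<circ> F) y) has_vector_derivative
        (G y * (F' * - (inverse (F y) ^ Suc (Suc 0))) + G' * (inverse \<circ> F) y)) (at y)"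
      by (rule has_vector_derivative_mult[OF dG dI])
    have GG: "G y * cnj (G y) = F y * cnj (F y)"
      using nrm[of y] by (metis complex_norm_square)
    have pqy: "G' * cnj (G y) = F' * cnj (F y)" using pq[of y] by (simp add: F'_def G'_def)
    have "cnj (G y) * (G' * F y - G y * F') = F y * (G' * cnj (G y)) - (G y * cnj (G y)) * F'"
      by (simp add: algebra_simps)
    also have "\<dots> = 0" by (simp add: pqy GG algebra_simps)
    finally have "G' * F y - G y * F' = 0" using Gy by simp
    then have key: "G' * F y = G y * F'" by simp
    have "G y * (F' * - (inverse (F y) ^ Suc (Suc 0))) + G' * (inverse \<circ> F) y
        = (G' * F y - G y * F') / (F y)^2"
      using Fy by (simp add: field_simps power2_eq_square)
    also have "\<dots> = 0" using key by simp
    finally show "((\<lambda>y. G y * inverse (F y)) has_vector_derivative 0) (at y within ball x1 e)"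
      using dQ by (auto intro: has_vector_derivative_at_within simp: o_def)
  qed
  obtain c where c: "\<And>y. y \<in> ball x1 e \<Longrightarrow> G y * inverse (F y) = c"
    using has_vector_derivative_zero_constant[OF convex_ball dz] by blast
  have loc: "G y - c * F y = 0" if "\<bar>y - x1\<bar> < e" for y
  proof -
    have "y \<in> ball x1 e" using that by (auto simp: dist_real_def abs_minus_commute)
    from c[OF this] e(2)[OF that] show ?thesis by (auto simp: field_simps)
  qed
  have RA2: "RA (\<lambda>y. G y - c * F y)" by (intro ra_diff ra_mult ra_const RG RF)
  have all: "G x - c * F x = 0" for x by (rule ra_identity[OF RA2 e(1) loc])
  have "norm (F x1) = norm c * norm (F x1)" using all[of x1] nrm[of x1] by (simp add: norm_mult)
  then have "norm c = 1" using x1 by simp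
  then show ?thesis using all by (intro exI[of _ c]) auto
qed

theorem mainTheorem5:
  fixes F G :: "real \<Rightarrow> complex"
  assumes "real_analytic F" and "real_analytic G"
    and "\<And>x. norm (F x) = norm (G x)"
    and "\<And>x. norm (vector_derivative F (at x)) = norm (vector_derivative G (at x))"
  shows "\<exists>c :: complex. norm c = 1 \<and>
           ((\<forall>x. G x = c * F x) \<or> (\<forall>x. G x = c * cnj (F x)))"
proof -
  have RF: "RA F" and RG: "RA G" using assms(1,2) by (auto intro: ra_of)
  define p where "p x = vector_derivative F (at x) * cnj (F x)" for x
  define q where "q x = vector_derivative G (at x) * cnj (G x)" for x
  have Nq: "(\<lambda>x. F x * cnj (F x)) = (\<lambda>x. G x * cnj (G x))"
    using assms(3) by (metis complex_norm_square)
  have sum: "p x + cnj (p x) = q x + cnj (q x)" for x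
  proof -
    have dF: "((\<lambda>x. F x * cnj (F x)) has_vector_derivative
        (F x * cnj (vector_derivative F (at x)) + vector_derivative F (at x) * cnj (F x))) (at x)"
      by (intro has_vector_derivative_mult has_vector_derivative_cnj ra_hasderiv[OF RF])
    have dG: "((\<lambda>x. G x * cnj (G x)) has_vector_derivative
        (G x * cnj (vector_derivative G (at x)) + vector_derivative G (at x) * cnj (G x))) (at x)"
      by (intro has_vector_derivative_mult has_vector_derivative_cnj ra_hasderiv[OF RG])
    from vector_derivative_unique_at[OF dF dG[folded Nq]]
    show ?thesis by (simp add: p_def q_def algebra_simps)
  qed
  have prod: "p x * cnj (p x) = q x * cnj (q x)" for x
  proof -
    have "norm (p x) = norm (q x)" using assms(3,4)[of x] by (simp add: p_def q_def norm_mult)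
    then show ?thesis by (metis complex_norm_square)
  qed
  define U where "U x = p x - cnj (p x)" for x
  define V where "V x = q x - cnj (q x)" for x
  have sq: "(U x - V x) * (U x + V x) = 0" for x
  proof -
    have "(U x - V x) * (U x + V x) = ((p x + cnj (p x))^2 - 4 * (p x * cnj (p x)))
        - ((q x + cnj (q x))^2 - 4 * (q x * cnj (q x)))"
      by (simp add: U_def V_def power2_eq_square algebra_simps)
    also have "\<dots> = 0" by (simp add: sum prod)
    finally show ?thesis .
  qed
  have Rp: "RA p" unfolding p_def by (intro ra_mult ra_vd ra_cnj RF)
  have Rq: "RA q" unfolding q_def by (intro ra_mult ra_vd ra_cnj RG)
  have RU: "RA U" unfolding U_def by (intro ra_diff ra_cnj Rp)
  have RV: "RA V" unfolding V_def by (intro ra_diff ra_cnj Rq)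
  show ?thesis
  proof (cases "\<forall>x. U x = V x")
    case True
    have "q x = p x" for x
    proof -
      have "2 * p x = (p x + cnj (p x)) + U x" by (simp add: U_def)
      also have "\<dots> = (q x + cnj (q x)) + V x" using True sum by simp
      also have "\<dots> = 2 * q x" by (simp add: V_def)
      finally show ?thesis by simp
    qed
    then obtain c where "norm c = 1" "\<forall>x. G x = c * F x"
      using ra_main[OF RF RG assms(3)] by (auto simp: p_def q_def)
    then show ?thesis by blast
  next
    case False
    then obtain x1 where x1: "U x1 - V x1 \<noteq> 0" by auto
    have RUV: "RA (\<lambda>x. U x - V x)" by (intro ra_diff RU RV)
    obtain e where e: "e > 0" "\<And>y. \<bar>y - x1\<bar> < e \<Longrightarrow> U y - V y \<noteq> 0"
      using ra_nbhd[OF RUV x1] by blast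
    have loc: "U y + V y = 0" if "\<bar>y - x1\<bar> < e" for y
      using sq[of y] e(2)[OF that] by simp
    have all: "U x + V x = 0" for x by (rule ra_identity[OF ra_add[OF RU RV] e(1) loc])
    have pc: "p x = cnj (q x)" for x
    proof -
      have "2 * p x = (p x + cnj (p x)) + U x" by (simp add: U_def)
      also have "\<dots> = (q x + cnj (q x)) - V x" using all[of x] sum[of x] by (simp add: eq_neg_iff_add_eq_0)
      also have "\<dots> = 2 * cnj (q x)" by (simp add: V_def)
      finally show ?thesis by simp
    qed
    define G2 where "G2 x = cnj (G x)" for x
    have RG2: "RA G2" unfolding G2_def by (intro ra_cnj RG)
    have "vector_derivative G2 (at x) * cnj (G2 x) = vector_derivative F (at x) * cnj (F x)" for x
    proof -
      have "vector_derivative G2 (at x) = cnj (vector_derivative G (at x))"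
        unfolding G2_def[abs_def] by (rule vector_derivative_cnj[OF ra_differentiable[OF RG]])
      then show ?thesis using pc[of x] by (simp add: G2_def p_def q_def)
    qed
    moreover have "norm (F x) = norm (G2 x)" for x using assms(3) by (simp add: G2_def)
    ultimately obtain c where c: "norm c = 1" "\<forall>x. G2 x = c * F x"
      using ra_main[OF RF RG2] by blast
    have "\<forall>x. G x = cnj c * cnj (F x)"
    proof
      fix x
      have "cnj (G x) = c * F x" using c(2) by (simp add: G2_def)
      then have "cnj (cnj (G x)) = cnj (c * F x)" by simp
      then show "G x = cnj c * cnj (F x)" by simp
    qed
    then show ?thesis using c(1) by (intro exI[of _ "cnj c"]) auto
  qed
qed

end
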